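(* Assume $\mathfrak{d}=\omega_1$, and let $\langle f_\alpha:\alpha<\omega_1\rangle$ be functions in ${}^\omega\omega$ with $f_\alpha<^*f_\beta$ whenever $\alpha<\beta$ and such that for every $g\in{}^\omega\omega$ there is $\alpha$ with $g<^*f_\alpha$. Let $\{P_i:i<\omega\}$ be a partition of $\omega$ into infinite sets, and for $\alpha<\omega_1$ let $Z_\alpha=\{n<\omega:\exists i\,(n\in P_i\text{ and }n>f_\alpha(i))\}$. Let $X$ be the space with underlying set $(\omega\times\omega_1)\cup\{\infty\}$, where all points of $\omega\times\omega_1$ are isolated and a local subbase at $\infty$ consists of the sets $X\setminus(P_i\times\omega_1)$ for $i<\omega$ and $X\setminus(Z_\alpha\times\alpha)$ for $\alpha<\omega_1$. Suppose $U$ is a filter on $\omega$ with dual ideal $I$ such that $P_i\in I$ for all $i<\omega$ and $Z_\alpha\notin I$ for all $\alpha<\omega_1$. Then $X$ is Fréchet and $L$-selective but not $U$-selective.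
   Context: $f<^*g$ means $f(n)<g(n)$ for all but finitely many $n$. A space is Fréchet if whenever $x\in\overline{A}$ there is a sequence in $A$ converging to $x$. $\mathcal{F}(X)$ is the set of nonempty closed subsets of $X$; $\varphi:Y\rightarrow\mathcal{F}(X)$ is lower semicontinuous if for every open $W\subseteq X$, $\{y:\varphi(y)\cap W\neq\emptyset\}$ is open in $Y$. $X$ is $Y$-selective if every lower semicontinuous $\varphi:Y\rightarrow\mathcal{F}(X)$ has a continuous selection $s:Y\rightarrow X$ (i.e., $s(y)\in\varphi(y)$ for all $y$). $X$ is $L$-selective if it is $(\omega+1)$-selective, where $\omega+1$ carries the order topology (a convergent sequence). For a filter $U$ on $\omega$, $Y_U$ is the space on $\omega\cup\{\infty\}$ with points of $\omega$ isolated and neighborhoods of $\infty$ the sets $A\cup\{\infty\}$, $A\in U$; $X$ is $U$-selective if it is $Y_U$-selective. *)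

theory Defs
  imports "HOL-Analysis.Analysis" "HOL-Library.Equipollence"
begin

definition less_star :: "(nat \<Rightarrow> nat) \<Rightarrow> (nat \<Rightarrow> nat) \<Rightarrow> bool" (infix "<*" 50)
  where "f <* g \<longleftrightarrow> finite {n. \<not> f n < g n}"

definition dominating :: "(nat \<Rightarrow> nat) set \<Rightarrow> bool"
  where "dominating D \<longleftrightarrow> (\<forall>g. \<exists>h\<in>D. finite {n. \<not> g n \<le> h n})"

definition dominating_number_is :: "'w set \<Rightarrow> bool"
  where "dominating_number_is W \<longleftrightarrow>
           (\<exists>D. dominating D \<and> D \<lesssim> W) \<and> (\<forall>D. dominating D \<longrightarrow> W \<lesssim> D)"

definition Frechet_space :: "'a topology \<Rightarrow> bool"
  where "Frechet_space X \<longleftrightarrow>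
    (\<forall>A x. A \<subseteq> topspace X \<and> x \<in> X closure_of A \<longrightarrow>
        (\<exists>\<sigma>. range \<sigma> \<subseteq> A \<and> limitin X \<sigma> x sequentially))"

definition lsc_map :: "'b topology \<Rightarrow> 'a topology \<Rightarrow> ('b \<Rightarrow> 'a set) \<Rightarrow> bool"
  where "lsc_map Y X \<phi> \<longleftrightarrow>
    (\<forall>y\<in>topspace Y. \<phi> y \<noteq> {} \<and> closedin X (\<phi> y)) \<and>
    (\<forall>W. openin X W \<longrightarrow> openin Y {y \<in> topspace Y. \<phi> y \<inter> W \<noteq> {}})"

definition selective :: "'b topology \<Rightarrow> 'a topology \<Rightarrow> bool"
  where "selective Y X \<longleftrightarrow>
    (\<forall>\<phi>. lsc_map Y X \<phi> \<longrightarrow>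
       (\<exists>s. continuous_map Y X s \<and> (\<forall>y\<in>topspace Y. s y \<in> \<phi> y)))"

text \<open>L-selective: (\<omega>+1)-selective, \<omega>+1 = enat with its order topology.\<close>
definition L_selective :: "'a topology \<Rightarrow> bool"
  where "L_selective X \<longleftrightarrow> selective (euclidean :: enat topology) X"

text \<open>The space Y_U on \<omega> \<union> {\<infinity>}, with None playing the role of \<infinity>.\<close>
definition filter_space :: "nat filter \<Rightarrow> nat option topology"
  where "filter_space U = topology (\<lambda>S. None \<in> S \<longrightarrow> eventually (\<lambda>n. Some n \<in> S) U)"

definition U_selective :: "nat filter \<Rightarrow> 'a topology \<Rightarrow> bool"
  where "U_selective U X \<longleftrightarrow> selective (filter_space U) X"

text \<open>The space X on (\<omega> \<times> omega_1) \<union> {\<infinity>}, with None playing the role of \<infinity>: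
  topology generated by all singletons of points of \<omega> \<times> omega_1 and the subbasic
  neighbourhoods X - (P i \<times> omega_1), X - (Z \<alpha> \<times> \<alpha>) of \<infinity>.\<close>
definition space_X :: "(nat \<Rightarrow> nat set) \<Rightarrow> ('w::wellorder \<Rightarrow> nat set) \<Rightarrow> (nat \<times> 'w) option topology"
  where "space_X P Z = topology_generated_by
     ({{Some p} | p. True}
      \<union> range (\<lambda>i. - (Some ` (P i \<times> UNIV)))
      \<union> range (\<lambda>\<alpha>. - (Some ` (Z \<alpha> \<times> {\<beta>. \<beta> < \<alpha>}))))"

end

theory Submission
  imports Defs
begin

definition okP :: "(nat \<Rightarrow> nat set) \<Rightarrow> nat \<Rightarrow> (nat \<times> 'w) option \<Rightarrow> bool"
  where "okP P i x \<longleftrightarrow> (\<forall>a b. x = Some (a,b) \<longrightarrow> a \<notin> P i)"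
definition okZ :: "('w::wellorder \<Rightarrow> nat set) \<Rightarrow> 'w \<Rightarrow> (nat \<times> 'w) option \<Rightarrow> bool"
  where "okZ Z \<alpha> x \<longleftrightarrow> (\<forall>a b. x = Some (a,b) \<longrightarrow> \<not> (a \<in> Z \<alpha> \<and> b < \<alpha>))"
definition nbX :: "(nat \<Rightarrow> nat set) \<Rightarrow> ('w::wellorder \<Rightarrow> nat set) \<Rightarrow> nat \<Rightarrow> 'w set \<Rightarrow> (nat \<times> 'w) option set"
  where "nbX P Z k E = {x. (\<forall>i<k. okP P i x) \<and> (\<forall>\<alpha>\<in>E. okZ Z \<alpha> x)}"

lemma None_nbX [simp]: "None \<in> nbX P Z k E"
  by (simp add: nbX_def okP_def okZ_def)

lemma Some_nbX: "Some (a,b) \<in> nbX P Z k E \<longleftrightarrow> (\<forall>i<k. a \<notin> P i) \<and> (\<forall>\<alpha>\<in>E. \<not> (a \<in> Z \<alpha> \<and> b < \<alpha>))"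
  by (simp add: nbX_def okP_def okZ_def)

lemma nbX_mono: "k' \<le> k \<Longrightarrow> E' \<subseteq> E \<Longrightarrow> nbX P Z k E \<subseteq> nbX P Z k' E'"
  by (auto simp: nbX_def)

lemma topspace_X [simp]: "topspace (space_X P Z) = UNIV"
proof -
  have "x \<in> \<Union>({{Some p} | p. True}
      \<union> range (\<lambda>i. - (Some ` (P i \<times> UNIV)))
      \<union> range (\<lambda>\<alpha>. - (Some ` (Z \<alpha> \<times> {\<beta>. \<beta> < \<alpha>}))))" for x
  proof (cases x)
    case None
    then show ?thesis by blast
  next
    case (Some p)
    then show ?thesis by blast
  qed
  then have "\<Union>({{Some p} | p. True}
      \<union> range (\<lambda>i. - (Some ` (P i \<times> UNIV)))
      \<union> range (\<lambda>\<alpha>. - (Some ` (Z \<alpha> \<times> {\<beta>. \<beta> < \<alpha>})))) = UNIV" by blast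
  then show ?thesis unfolding space_X_def topology_generated_by_topspace by simp
qed

lemma openin_X:
  "openin (space_X P Z) S \<longleftrightarrow> (None \<in> S \<longrightarrow> (\<exists>k E. finite E \<and> nbX P Z k E \<subseteq> S))"
proof -
  define B where "B = ({{Some p} | p. True}
      \<union> range (\<lambda>i. - (Some ` (P i \<times> UNIV)))
      \<union> range (\<lambda>\<alpha>. - (Some ` (Z \<alpha> \<times> {\<beta>. \<beta> < \<alpha>}))))"
  have sX: "space_X P Z = topology_generated_by B" unfolding space_X_def B_def by simp
  have bP: "- (Some ` (P i \<times> UNIV)) = Collect (okP P i)" for i
    by (auto simp: okP_def)
  have bZ: "- (Some ` (Z \<alpha> \<times> {\<beta>. \<beta> < \<alpha>})) = Collect (okZ Z \<alpha>)" for \<alpha>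
    by (auto simp: okZ_def)
  have gUNIV: "generate_topology_on B UNIV"
  proof -
    have "UNIV = \<Union>(insert (- (Some ` (P 0 \<times> UNIV))) {{Some p} | p. True})"
      by auto
    moreover have "\<And>k. k \<in> insert (- (Some ` (P 0 \<times> UNIV))) {{Some p} | p. True} \<Longrightarrow> generate_topology_on B k"
    proof -
      fix k :: "(nat \<times> 'a) option set" assume "k \<in> insert (- (Some ` (P 0 \<times> UNIV))) {{Some p} | p. True}"
      then have "k \<in> B" unfolding B_def by blast
      then show "generate_topology_on B k" by (rule generate_topology_on.Basis)
    qed
    ultimately show ?thesis by (metis generate_topology_on.UN)
  qed
  have gk: "generate_topology_on B (nbX P Z k {})" for k
  proof (induction k)
    case 0
    have "nbX P Z 0 {} = UNIV" by (simp add: nbX_def)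
    then show ?case using gUNIV by simp
  next
    case (Suc k)
    have "nbX P Z (Suc k) {} = nbX P Z k {} \<inter> Collect (okP P k)"
      by (auto simp: nbX_def less_Suc_eq)
    moreover have "generate_topology_on B (Collect (okP P k))"
      by (rule generate_topology_on.Basis) (unfold B_def bP[symmetric], rule UnI1[OF UnI2], rule rangeI)
    ultimately show ?case using generate_topology_on.Int[OF Suc.IH] by simp
  qed
  have gE: "finite E \<Longrightarrow> generate_topology_on B (nbX P Z k E)" for E k
  proof (induction E rule: finite_induct)
    case empty
    then show ?case using gk by simp
  next
    case (insert \<alpha> E)
    have "nbX P Z k (insert \<alpha> E) = nbX P Z k E \<inter> Collect (okZ Z \<alpha>)"
      by (auto simp: nbX_def)
    moreover have "generate_topology_on B (Collect (okZ Z \<alpha>))"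
      by (rule generate_topology_on.Basis) (unfold B_def bZ[symmetric], rule UnI2, rule rangeI)
    ultimately show ?case using generate_topology_on.Int[OF insert.IH] by simp
  qed
  have gS: "generate_topology_on B S" if NS: "None \<notin> S" for S
  proof -
    have S: "S = \<Union>{{x} | x. x \<in> S}" by auto
    have K: "\<And>k. k \<in> {{x} | x. x \<in> S} \<Longrightarrow> generate_topology_on B k"
    proof -
      fix k assume "k \<in> {{x} | x. x \<in> S}"
      then obtain x where x: "k = {x}" "x \<in> S" by blast
      then obtain p where "x = Some p" using NS by (cases x) auto
      then have "k \<in> {{Some p} | p. True}" using x by blast
      then have "k \<in> B" unfolding B_def by (rule UnI1[OF UnI1])
      then show "generate_topology_on B k" by (rule generate_topology_on.Basis)
    qed
    have "generate_topology_on B (\<Union>{{x} | x. x \<in> S})"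
      by (rule generate_topology_on.UN) (rule K)
    then show ?thesis using S by simp
  qed
  show ?thesis
  proof
    assume "openin (space_X P Z) S"
    then have "generate_topology_on B S" unfolding sX by (rule openin_topology_generated_by)
    then show "None \<in> S \<longrightarrow> (\<exists>k E. finite E \<and> nbX P Z k E \<subseteq> S)"
    proof (induction rule: generate_topology_on.induct)
      case Empty
      then show ?case by simp
    next
      case (Int a b)
      show ?case
      proof
        assume "None \<in> a \<inter> b"
        then obtain k1 E1 k2 E2 where "finite E1" "nbX P Z k1 E1 \<subseteq> a" "finite E2" "nbX P Z k2 E2 \<subseteq> b"
          using Int by auto
        moreover have "nbX P Z (max k1 k2) (E1 \<union> E2) \<subseteq> nbX P Z k1 E1"
          "nbX P Z (max k1 k2) (E1 \<union> E2) \<subseteq> nbX P Z k2 E2" by (rule nbX_mono; simp)+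
        ultimately have "finite (E1 \<union> E2) \<and> nbX P Z (max k1 k2) (E1 \<union> E2) \<subseteq> a \<inter> b"
          by blast
        then show "\<exists>k E. finite E \<and> nbX P Z k E \<subseteq> a \<inter> b" by blast
      qed
    next
      case (UN K)
      show ?case
      proof
        assume "None \<in> \<Union>K"
        then obtain k where k: "k \<in> K" "None \<in> k" by blast
        then obtain k0 E where "finite E" "nbX P Z k0 E \<subseteq> k" using UN.IH by blast
        then show "\<exists>k E. finite E \<and> nbX P Z k E \<subseteq> \<Union>K" using k(1) by blast
      qed
    next
      case (Basis s)
      then consider "\<exists>p. s = {Some p}" | i where "s = Collect (okP P i)" | \<alpha> where "s = Collect (okZ Z \<alpha>)"
        unfolding B_def
      proof (elim UnE)
        assume "s \<in> {{Some p} | p. True}" then show ?thesis using that(1) by blast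
      next
        assume "s \<in> range (\<lambda>i. - (Some ` (P i \<times> UNIV)))"
        then obtain i where "s = - (Some ` (P i \<times> UNIV))" by blast
        then show ?thesis using that(2) bP by blast
      next
        assume "s \<in> range (\<lambda>\<alpha>. - (Some ` (Z \<alpha> \<times> {\<beta>. \<beta> < \<alpha>})))"
        then obtain \<alpha> where "s = - (Some ` (Z \<alpha> \<times> {\<beta>. \<beta> < \<alpha>}))" by blast
        then show ?thesis using that(3) bZ by blast
      qed
      then show ?case
      proof cases
        case 1 then show ?thesis by auto
      next
        case 2
        then have "nbX P Z (Suc i) {} \<subseteq> s" by (auto simp: nbX_def)
        then show ?thesis by blast
      next
        case 3
        then have "nbX P Z 0 {\<alpha>} \<subseteq> s" by (auto simp: nbX_def)
        then show ?thesis by blast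
      qed
    qed
  next
    assume H: "None \<in> S \<longrightarrow> (\<exists>k E. finite E \<and> nbX P Z k E \<subseteq> S)"
    show "openin (space_X P Z) S"
      unfolding sX openin_topology_generated_by_iff
    proof (cases "None \<in> S")
      case True
      then obtain k E where "finite E" "nbX P Z k E \<subseteq> S" using H by blast
      then have SS: "S = \<Union>{nbX P Z k E, S - {None}}" by auto
      have g1: "generate_topology_on B (nbX P Z k E)" using \<open>finite E\<close> by (rule gE)
      have g2: "generate_topology_on B (S - {None})" by (rule gS) simp
      have "generate_topology_on B (\<Union>{nbX P Z k E, S - {None}})"
        by (rule generate_topology_on.UN) (use g1 g2 in blast)
      then show "generate_topology_on B S" using SS by simp
    next
      case False
      then show "generate_topology_on B S" by (rule gS)
    qed
  qed
qed

lemma nbX_open: "finite E \<Longrightarrow> openin (space_X P Z) (nbX P Z k E)"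
  unfolding openin_X by blast

lemma Some_open: "openin (space_X P Z) {Some p}"
proof -
  have "None \<notin> {Some p}" by simp
  then show ?thesis by (simp only: openin_X) blast
qed

lemma limitin_None:
  "limitin (space_X P Z) \<sigma> None F \<longleftrightarrow> (\<forall>k E. finite E \<longrightarrow> eventually (\<lambda>n. \<sigma> n \<in> nbX P Z k E) F)"
proof
  assume L: "limitin (space_X P Z) \<sigma> None F"
  have "eventually (\<lambda>n. \<sigma> n \<in> nbX P Z k E) F" if "finite E" for k E
  proof -
    have "openin (space_X P Z) (nbX P Z k E)" using that by (rule nbX_open)
    then show "eventually (\<lambda>n. \<sigma> n \<in> nbX P Z k E) F"
      using L unfolding limitin_def by (meson None_nbX)
  qed
  then show "\<forall>k E. finite E \<longrightarrow> eventually (\<lambda>n. \<sigma> n \<in> nbX P Z k E) F" by blast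
next
  assume H: "\<forall>k E. finite E \<longrightarrow> eventually (\<lambda>n. \<sigma> n \<in> nbX P Z k E) F"
  have "eventually (\<lambda>n. \<sigma> n \<in> U) F" if U1: "openin (space_X P Z) U" and U2: "None \<in> U" for U
  proof -
    have "None \<in> U \<longrightarrow> (\<exists>k E. finite E \<and> nbX P Z k E \<subseteq> U)" using U1 by (rule iffD1[OF openin_X])
    then obtain k E where "finite E" "nbX P Z k E \<subseteq> U" using U2 by blast
    moreover have "eventually (\<lambda>n. \<sigma> n \<in> nbX P Z k E) F" using H \<open>finite E\<close> by blast
    ultimately show ?thesis using eventually_mono[of "\<lambda>n. \<sigma> n \<in> nbX P Z k E" F "\<lambda>n. \<sigma> n \<in> U"] by blast
  qed
  then show "limitin (space_X P Z) \<sigma> None F"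
    unfolding limitin_def by simp
qed

lemma closure_None:
  "None \<in> space_X P Z closure_of A \<longleftrightarrow> (\<forall>k E. finite E \<longrightarrow> A \<inter> nbX P Z k E \<noteq> {})"
proof
  assume C: "None \<in> space_X P Z closure_of A"
  have "A \<inter> nbX P Z k E \<noteq> {}" if "finite E" for k E
  proof -
    have "openin (space_X P Z) (nbX P Z k E)" using that by (rule nbX_open)
    moreover have "\<forall>T. None \<in> T \<and> openin (space_X P Z) T \<longrightarrow> (\<exists>y. y \<in> A \<and> y \<in> T)"
      using C[unfolded in_closure_of] by (rule conjunct2)
    ultimately have "\<exists>y. y \<in> A \<and> y \<in> nbX P Z k E"
      using None_nbX[of P Z k E] by (elim allE[where x="nbX P Z k E"]) simp
    then show ?thesis by blast
  qed
  then show "\<forall>k E. finite E \<longrightarrow> A \<inter> nbX P Z k E \<noteq> {}" by blast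
next
  assume H: "\<forall>k E. finite E \<longrightarrow> A \<inter> nbX P Z k E \<noteq> {}"
  have "A \<inter> T \<noteq> {}" if U1: "openin (space_X P Z) T" and U2: "None \<in> T" for T
  proof -
    have "None \<in> T \<longrightarrow> (\<exists>k E. finite E \<and> nbX P Z k E \<subseteq> T)" using U1 by (rule iffD1[OF openin_X])
    then obtain k E where "finite E" "nbX P Z k E \<subseteq> T" using U2 by blast
    then show ?thesis using H by blast
  qed
  then have "\<forall>T. None \<in> T \<and> openin (space_X P Z) T \<longrightarrow> (\<exists>y. y \<in> A \<and> y \<in> T)" by blast
  moreover have "None \<in> topspace (space_X P Z)" by simp
  ultimately show "None \<in> space_X P Z closure_of A" unfolding in_closure_of by (intro conjI)
qed

lemma less_star_trans: "f <* g \<Longrightarrow> g <* h \<Longrightarrow> f <* (h::nat\<Rightarrow>nat)"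
proof -
  assume "f <* g" "g <* h"
  then have "finite ({n. \<not> f n < g n} \<union> {n. \<not> g n < h n})" by (simp add: less_star_def)
  moreover have "{n. \<not> f n < h n} \<subseteq> {n. \<not> f n < g n} \<union> {n. \<not> g n < h n}" by auto
  ultimately show ?thesis unfolding less_star_def by (rule finite_subset[rotated])
qed

locale setting =
  fixes f :: "'w::wellorder \<Rightarrow> nat \<Rightarrow> nat"
    and P :: "nat \<Rightarrow> nat set"
    and Z :: "'w \<Rightarrow> nat set"
  assumes unc: "uncountable (UNIV :: 'w set)"
    and seg: "\<forall>\<alpha>::'w. countable {\<beta>. \<beta> < \<alpha>}"
    and f_incr: "\<forall>\<alpha> \<beta>. \<alpha> < \<beta> \<longrightarrow> f \<alpha> <* f \<beta>"
    and f_dom: "\<forall>g. \<exists>\<alpha>. g <* f \<alpha>"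
    and P_inf: "\<forall>i. infinite (P i)"
    and P_disj: "\<forall>i j. i \<noteq> j \<longrightarrow> P i \<inter> P j = {}"
    and P_cover: "(\<Union>i. P i) = UNIV"
    and Z_def: "\<forall>\<alpha>. Z \<alpha> = {n. \<exists>i. n \<in> P i \<and> n > f \<alpha> i}"
begin

lemma bound: "countable (S::'w set) \<Longrightarrow> \<exists>\<gamma>. \<forall>\<beta>\<in>S. \<beta> < \<gamma>"
proof -
  assume S: "countable S"
  have "countable (\<Union>\<beta>\<in>S. insert \<beta> {x. x < \<beta>})"
    using S seg by (intro countable_UN) auto
  then have "(\<Union>\<beta>\<in>S. insert \<beta> {x. x < \<beta>}) \<noteq> UNIV" using unc by auto
  then obtain \<gamma> where "\<gamma> \<notin> (\<Union>\<beta>\<in>S. insert \<beta> {x. x < \<beta>})" by auto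
  then have "\<forall>\<beta>\<in>S. \<beta> < \<gamma>" by (auto simp: not_less_iff_gr_or_eq)
  then show ?thesis by blast
qed

definition lev :: "nat \<Rightarrow> nat" where "lev a = (THE i. a \<in> P i)"

lemma lev: "a \<in> P (lev a)"
proof -
  obtain i where i: "a \<in> P i" using P_cover by blast
  have "\<And>j. a \<in> P j \<Longrightarrow> j = i" using i P_disj by blast
  then have "lev a = i" unfolding lev_def using i by (rule the_equality[rotated])
  then show ?thesis using i by simp
qed

lemma lev_eq: "a \<in> P i \<Longrightarrow> lev a = i"
  using lev P_disj by blast

lemma notP_lev: "(\<forall>i<k. a \<notin> P i) \<longleftrightarrow> k \<le> lev a"
  using lev lev_eq by (metis not_le)

lemma Z_iff: "a \<in> Z \<alpha> \<longleftrightarrow> f \<alpha> (lev a) < a"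
proof -
  have "a \<in> Z \<alpha> \<longleftrightarrow> (\<exists>i. a \<in> P i \<and> f \<alpha> i < a)" using Z_def by auto
  also have "\<dots> \<longleftrightarrow> f \<alpha> (lev a) < a" using lev lev_eq by metis
  finally show ?thesis .
qed

lemma Some_nbX': "Some (a,b) \<in> nbX P Z k E \<longleftrightarrow> k \<le> lev a \<and> (\<forall>\<alpha>\<in>E. \<not> (a \<in> Z \<alpha> \<and> b < \<alpha>))"
  by (simp add: Some_nbX notP_lev)

lemma dom_above: "\<exists>\<alpha>0. \<forall>\<alpha>. \<alpha>0 \<le> \<alpha> \<longrightarrow> g <* f \<alpha>"
proof -
  obtain \<alpha>0 where a0: "g <* f \<alpha>0" using f_dom by blast
  have "g <* f \<alpha>" if "\<alpha>0 \<le> \<alpha>" for \<alpha>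
  proof (cases "\<alpha>0 = \<alpha>")
    case True then show ?thesis using a0 by simp
  next
    case False
    then have "\<alpha>0 < \<alpha>" using that by simp
    then show ?thesis using a0 f_incr less_star_trans by blast
  qed
  then show ?thesis by blast
qed

lemma Z_mono: "\<gamma> \<le> \<alpha> \<Longrightarrow> \<exists>c. \<forall>a. a \<in> Z \<alpha> \<longrightarrow> lev a < c \<or> a \<in> Z \<gamma>"
proof (cases "\<gamma> = \<alpha>")
  case True then show ?thesis by blast
next
  case False
  assume "\<gamma> \<le> \<alpha>"
  with False have "\<gamma> < \<alpha>" by simp
  then have "finite {i. \<not> f \<gamma> i < f \<alpha> i}" using f_incr by (simp add: less_star_def)
  then obtain c where c: "\<forall>i\<in>{i. \<not> f \<gamma> i < f \<alpha> i}. i < c" using finite_nat_set_iff_bounded by blast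
  have "lev a < c \<or> a \<in> Z \<gamma>" if "a \<in> Z \<alpha>" for a
  proof (cases "lev a < c")
    case False
    then have "f \<gamma> (lev a) < f \<alpha> (lev a)" using c by auto
    then show ?thesis using that Z_iff by auto
  qed simp
  then show ?thesis by blast
qed

lemma P_nonempty: "\<exists>a. a \<in> P i"
  using P_inf by (metis ex_in_conv finite.emptyI)

end

context setting begin

lemma core:
  fixes A :: "nat \<Rightarrow> (nat \<times> 'w) set"
  assumes ne: "\<And>n. A n \<noteq> {}"
    and H: "\<And>k E. finite E \<Longrightarrow> eventually (\<lambda>n. \<exists>a b. (a,b) \<in> A n \<and> k \<le> lev a \<and> (\<forall>\<alpha>\<in>E. \<not> (a \<in> Z \<alpha> \<and> b < \<alpha>))) sequentially"
  shows "\<exists>\<sigma>. (\<forall>n. \<sigma> n \<in> A n) \<and> (\<forall>k. eventually (\<lambda>n. k \<le> lev (fst (\<sigma> n))) sequentially)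
     \<and> (\<forall>\<alpha>. eventually (\<lambda>n. \<not> (fst (\<sigma> n) \<in> Z \<alpha> \<and> snd (\<sigma> n) < \<alpha>)) sequentially)"
proof -
  define bdd where "bdd n a \<longleftrightarrow> (\<exists>\<delta>. \<forall>b. (a,b) \<in> A n \<longrightarrow> b < \<delta>)" for n a
  have cnt: "countable (\<Union>n. \<Union>a. {b. (a,b) \<in> A n \<and> bdd n a})"
  proof (intro countable_UN)
    fix n a
    show "countable {b. (a,b) \<in> A n \<and> bdd n a}"
    proof (cases "bdd n a")
      case True
      then obtain \<delta> where d: "\<forall>b. (a,b) \<in> A n \<longrightarrow> b < \<delta>" unfolding bdd_def by blast
      then have "{b. (a,b) \<in> A n \<and> bdd n a} \<subseteq> {b. b < \<delta>}" by auto
      moreover have "countable {b. b < \<delta>}" using seg by blast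
      ultimately show ?thesis using countable_subset by blast
    next
      case False then show ?thesis by simp
    qed
  qed simp_all
  obtain \<gamma>0 where \<gamma>0: "\<forall>\<beta> \<in> (\<Union>n. \<Union>a. {b. (a,b) \<in> A n \<and> bdd n a}). \<beta> < \<gamma>0"
    using bound[OF cnt] by blast
  have \<gamma>0': "b < \<gamma>0" if "(a,b) \<in> A n" "bdd n a" for n a b
    using \<gamma>0 that by blast
  define D where "D = {\<alpha>. \<alpha> \<le> \<gamma>0}"
  have "D = insert \<gamma>0 {\<alpha>. \<alpha> < \<gamma>0}" unfolding D_def by auto
  then have Dc: "countable D" using seg by simp
  have Dne: "D \<noteq> {}" unfolding D_def by auto
  define e where "e = from_nat_into D"
  have e_range: "range e = D" unfolding e_def using range_from_nat_into[OF Dne Dc] .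
  define EE where "EE m = e ` {..<m}" for m
  have EEfin: "finite (EE m)" for m unfolding EE_def by simp
  have EEmono: "m' \<le> m \<Longrightarrow> EE m' \<subseteq> EE m" for m m' unfolding EE_def by auto
  have EEin: "\<exists>j. \<forall>m>j. \<alpha> \<in> EE m" if "\<alpha> \<le> \<gamma>0" for \<alpha>
  proof -
    have "\<alpha> \<in> range e" using that e_range D_def by simp
    then obtain j where "\<alpha> = e j" by blast
    then have "\<forall>m>j. \<alpha> \<in> EE m" unfolding EE_def by auto
    then show ?thesis by blast
  qed
  define gd where "gd m E a b \<longleftrightarrow> m \<le> lev a \<and> (\<forall>\<alpha>\<in>E. \<not> (a \<in> Z \<alpha> \<and> b < \<alpha>))" for m E a b
  define ga where "ga n m \<longleftrightarrow> (\<exists>a b. (a,b) \<in> A n \<and> bdd n a \<and> gd m (EE m) a b)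
      \<or> (\<exists>a b. (a,b) \<in> A n \<and> \<not> bdd n a \<and> m \<le> lev a)" for n m
  have ev_ga: "eventually (\<lambda>n. ga n m) sequentially" for m
    using H[OF EEfin[of m], of m]
  proof (rule eventually_mono)
    fix n assume "\<exists>a b. (a,b) \<in> A n \<and> m \<le> lev a \<and> (\<forall>\<alpha>\<in>EE m. \<not> (a \<in> Z \<alpha> \<and> b < \<alpha>))"
    then obtain a b where ab: "(a,b) \<in> A n" "m \<le> lev a" "\<forall>\<alpha>\<in>EE m. \<not> (a \<in> Z \<alpha> \<and> b < \<alpha>)" by blast
    show "ga n m"
    proof (cases "bdd n a")
      case True
      then show ?thesis unfolding ga_def gd_def using ab by blast
    next
      case False
      then show ?thesis unfolding ga_def using ab by blast
    qed
  qed
  have ga0: "ga n 0" for n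
  proof -
    obtain a b where ab: "(a,b) \<in> A n" using ne by fast
    show ?thesis
    proof (cases "bdd n a")
      case True
      then show ?thesis unfolding ga_def gd_def EE_def using ab by auto
    next
      case False
      then show ?thesis unfolding ga_def using ab by blast
    qed
  qed
  define mm where "mm n = Max {m. m \<le> n \<and> ga n m}" for n
  have finS: "finite {m. m \<le> n \<and> ga n m}" for n by simp
  have neS: "{m. m \<le> n \<and> ga n m} \<noteq> {}" for n using ga0 by blast
  have mm_ga: "ga n (mm n)" for n
    using Max_in[OF finS neS] unfolding mm_def by blast
  have mm_ge: "m \<le> mm n" if "m \<le> n" "ga n m" for m n
    unfolding mm_def using that by (intro Max_ge[OF finS]) simp
  have mm_tends: "eventually (\<lambda>n. M \<le> mm n) sequentially" for M
    using eventually_conj[OF ev_ga[of M] eventually_ge_at_top[of M]]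
    by (rule eventually_mono) (use mm_ge in blast)
  define t1 where "t1 n \<longleftrightarrow> (\<exists>a b. (a,b) \<in> A n \<and> bdd n a \<and> gd (mm n) (EE (mm n)) a b)" for n
  define p1 where "p1 n = (SOME p. p \<in> A n \<and> bdd n (fst p) \<and> gd (mm n) (EE (mm n)) (fst p) (snd p))" for n
  have p1: "p1 n \<in> A n \<and> bdd n (fst (p1 n)) \<and> gd (mm n) (EE (mm n)) (fst (p1 n)) (snd (p1 n))"
    if T: "t1 n" for n
  proof -
    have "\<exists>p. p \<in> A n \<and> bdd n (fst p) \<and> gd (mm n) (EE (mm n)) (fst p) (snd p)"
      using T unfolding t1_def by fastforce
    then show ?thesis unfolding p1_def by (rule someI_ex)
  qed
  define c2 where "c2 n = (SOME a. \<exists>b. (a,b) \<in> A n \<and> \<not> bdd n a \<and> mm n \<le> lev a)" for n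
  have c2: "(\<exists>b. (c2 n, b) \<in> A n) \<and> \<not> bdd n (c2 n) \<and> mm n \<le> lev (c2 n)" if "\<not> t1 n" for n
  proof -
    have "\<exists>a b. (a,b) \<in> A n \<and> \<not> bdd n a \<and> mm n \<le> lev a"
      using mm_ga[of n] that unfolding ga_def t1_def by blast
    then have "\<exists>b. (c2 n,b) \<in> A n \<and> \<not> bdd n (c2 n) \<and> mm n \<le> lev (c2 n)"
      unfolding c2_def by (rule someI_ex)
    then show ?thesis by blast
  qed
  define c where "c n = (if t1 n then fst (p1 n) else c2 n)" for n
  have lev_c: "mm n \<le> lev (c n)" for n
  proof (cases "t1 n")
    case True
    then show ?thesis using p1[OF True] unfolding c_def gd_def by simp
  next
    case False
    then show ?thesis using c2[OF False] unfolding c_def by simp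
  qed
  have fin_mm: "finite {n. mm n \<le> i}" for i
  proof -
    obtain N where N: "\<forall>n\<ge>N. Suc i \<le> mm n" using mm_tends[of "Suc i"] unfolding eventually_sequentially by blast
    have "{n. mm n \<le> i} \<subseteq> {..<N}"
    proof
      fix n assume "n \<in> {n. mm n \<le> i}"
      then have "mm n \<le> i" by simp
      then have "\<not> N \<le> n" using N by (meson not_less_eq_eq)
      then show "n \<in> {..<N}" by simp
    qed
    then show ?thesis using finite_subset by blast
  qed
  define g where "g i = Max (c ` {n. mm n \<le> i})" for i
  have c_le_g: "c n \<le> g (lev (c n))" for n
  proof -
    have "n \<in> {n'. mm n' \<le> lev (c n)}" using lev_c[of n] by simp
    then have "c n \<in> c ` {n'. mm n' \<le> lev (c n)}" by (rule imageI)
    then show ?thesis unfolding g_def using fin_mm by (intro Max_ge) simp_all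
  qed
  obtain \<alpha>0 where \<alpha>0: "\<forall>\<alpha>. \<alpha>0 \<le> \<alpha> \<longrightarrow> g <* f \<alpha>" using dom_above by blast
  define b2 where "b2 n = (SOME b. (c2 n, b) \<in> A n \<and> \<alpha>0 \<le> b)" for n
  have b2: "(c2 n, b2 n) \<in> A n \<and> \<alpha>0 \<le> b2 n" if "\<not> t1 n" for n
  proof -
    have "\<not> bdd n (c2 n)" using c2[OF that] by blast
    then have "\<not> (\<forall>b. (c2 n, b) \<in> A n \<longrightarrow> b < \<alpha>0)" unfolding bdd_def by blast
    then obtain b where "(c2 n, b) \<in> A n" "\<not> b < \<alpha>0" by blast
    then have "\<exists>b. (c2 n, b) \<in> A n \<and> \<alpha>0 \<le> b" by (intro exI[of _ b]) simp
    then show ?thesis unfolding b2_def by (rule someI_ex)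
  qed
  define \<sigma> where "\<sigma> n = (if t1 n then p1 n else (c2 n, b2 n))" for n
  have \<sigma>A: "\<sigma> n \<in> A n" for n
    using p1[of n] b2[of n] unfolding \<sigma>_def by (cases "t1 n") simp_all
  have fst\<sigma>: "fst (\<sigma> n) = c n" for n unfolding \<sigma>_def c_def by simp
  have part3: "eventually (\<lambda>n. \<not> (fst (\<sigma> n) \<in> Z \<alpha> \<and> snd (\<sigma> n) < \<alpha>)) sequentially" for \<alpha>
  proof (cases "\<alpha>0 \<le> \<alpha>")
    case True
    then have "g <* f \<alpha>" using \<alpha>0 by blast
    then have "finite {i. \<not> g i < f \<alpha> i}" by (simp add: less_star_def)
    then obtain K where K: "\<forall>i\<in>{i. \<not> g i < f \<alpha> i}. i < K" using finite_nat_set_iff_bounded by blast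
    show ?thesis using mm_tends[of K]
    proof (rule eventually_mono)
      fix n assume "K \<le> mm n"
      then have "K \<le> lev (c n)" using lev_c[of n] by simp
      then have "g (lev (c n)) < f \<alpha> (lev (c n))" using K by force
      then have "\<not> f \<alpha> (lev (c n)) < c n" using c_le_g[of n] by linarith
      then have "c n \<notin> Z \<alpha>" using Z_iff by simp
      then show "\<not> (fst (\<sigma> n) \<in> Z \<alpha> \<and> snd (\<sigma> n) < \<alpha>)" using fst\<sigma> by simp
    qed
  next
    case False
    then have a\<alpha>0: "\<alpha> < \<alpha>0" by simp
    obtain M where M: "\<forall>n. M \<le> mm n \<longrightarrow> t1 n \<longrightarrow> \<not> (c n \<in> Z \<alpha> \<and> snd (p1 n) < \<alpha>)"
    proof (cases "\<alpha> \<le> \<gamma>0")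
      case True
      then obtain j where j: "\<forall>m>j. \<alpha> \<in> EE m" using EEin by blast
      show ?thesis
      proof (rule that[of "Suc j"], intro allI impI)
        fix n assume mn: "Suc j \<le> mm n" and t: "t1 n"
        then have "\<alpha> \<in> EE (mm n)" using j by simp
        moreover have "gd (mm n) (EE (mm n)) (c n) (snd (p1 n))" using p1[OF t] t unfolding c_def by simp
        ultimately show "\<not> (c n \<in> Z \<alpha> \<and> snd (p1 n) < \<alpha>)" unfolding gd_def by blast
      qed
    next
      case False
      then have "\<gamma>0 \<le> \<alpha>" by simp
      then obtain c0 where c0: "\<forall>a. a \<in> Z \<alpha> \<longrightarrow> lev a < c0 \<or> a \<in> Z \<gamma>0" using Z_mono by blast
      obtain j where j: "\<forall>m>j. \<gamma>0 \<in> EE m" using EEin[of \<gamma>0] by blast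
      show ?thesis
      proof (rule that[of "max (Suc j) c0"], intro allI impI)
        fix n assume mn: "max (Suc j) c0 \<le> mm n" and t: "t1 n"
        have g1: "\<gamma>0 \<in> EE (mm n)" using j mn by simp
        have g2: "gd (mm n) (EE (mm n)) (c n) (snd (p1 n))" using p1[OF t] t unfolding c_def by simp
        have "(fst (p1 n), snd (p1 n)) \<in> A n" "bdd n (fst (p1 n))" using p1[OF t] by simp_all
        then have bd: "snd (p1 n) < \<gamma>0" by (rule \<gamma>0')
        show "\<not> (c n \<in> Z \<alpha> \<and> snd (p1 n) < \<alpha>)"
        proof
          assume "c n \<in> Z \<alpha> \<and> snd (p1 n) < \<alpha>"
          then have "lev (c n) < c0 \<or> c n \<in> Z \<gamma>0" using c0 by blast
          moreover have "c0 \<le> lev (c n)" using mn lev_c[of n] by simp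
          ultimately have "c n \<in> Z \<gamma>0" by simp
          then show False using g1 g2 bd unfolding gd_def by blast
        qed
      qed
    qed
    show ?thesis using mm_tends[of M]
    proof (rule eventually_mono)
      fix n assume Mn: "M \<le> mm n"
      show "\<not> (fst (\<sigma> n) \<in> Z \<alpha> \<and> snd (\<sigma> n) < \<alpha>)"
      proof (cases "t1 n")
        case True
        then show ?thesis using M Mn unfolding \<sigma>_def c_def by simp
      next
        case False
        then have "\<alpha>0 \<le> b2 n" using b2 by blast
        then have "\<alpha> < b2 n" using a\<alpha>0 by (rule order.strict_trans2[rotated])
        then have "\<not> b2 n < \<alpha>" by simp
        then show ?thesis using False unfolding \<sigma>_def by simp
      qed
    qed
  qed
  have part2: "eventually (\<lambda>n. k \<le> lev (fst (\<sigma> n))) sequentially" for k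
    using mm_tends[of k] by (rule eventually_mono) (use lev_c fst\<sigma> in \<open>metis le_trans\<close>)
  show ?thesis using \<sigma>A part2 part3 by blast
qed

end

lemma filter_open:
  "openin (filter_space U) S \<longleftrightarrow> (None \<in> S \<longrightarrow> eventually (\<lambda>n. Some n \<in> S) U)"
proof -
  define L where "L = (\<lambda>S. None \<in> S \<longrightarrow> eventually (\<lambda>n. Some n \<in> S) U)"
  have "istopology L"
    unfolding istopology_def
  proof (intro conjI allI impI)
    fix S T assume "L S" "L T"
    then show "L (S \<inter> T)" unfolding L_def by (auto intro: eventually_conj)
  next
    fix K assume K: "\<forall>k\<in>K. L k"
    show "L (\<Union>K)" unfolding L_def
    proof
      assume "None \<in> \<Union>K"
      then obtain k where k: "k \<in> K" "None \<in> k" by blast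
      then have "eventually (\<lambda>n. Some n \<in> k) U" using K unfolding L_def by blast
      then show "eventually (\<lambda>n. Some n \<in> \<Union>K) U" by (rule eventually_mono) (use k in blast)
    qed
  qed
  then have "openin (topology L) = L" by (rule topology_inverse')
  then show ?thesis unfolding filter_space_def L_def[symmetric] by (simp add: L_def)
qed

lemma topspace_filter_space [simp]: "topspace (filter_space U) = UNIV"
proof -
  have "openin (filter_space U) UNIV" unfolding filter_open by simp
  then show ?thesis using openin_subset by blast
qed

lemma cont_enat:
  fixes s :: "enat \<Rightarrow> 'a"
  assumes ev: "\<And>U. openin X U \<Longrightarrow> s \<infinity> \<in> U \<Longrightarrow> eventually (\<lambda>n. s (enat n) \<in> U) sequentially"
    and ts: "\<And>y. s y \<in> topspace X"
  shows "continuous_map euclidean X s"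
  unfolding continuous_map_def
proof (intro conjI allI impI)
  show "s \<in> topspace euclidean \<rightarrow> topspace X" using ts by blast
next
  fix U assume U: "openin X U"
  have "open {x. s x \<in> U}"
    unfolding open_enat_iff
  proof
    assume "\<infinity> \<in> {x. s x \<in> U}"
    then have "eventually (\<lambda>n. s (enat n) \<in> U) sequentially" using ev U by blast
    then obtain N where N: "\<forall>n\<ge>N. s (enat n) \<in> U" unfolding eventually_sequentially by blast
    have "{enat N<..} \<subseteq> {x. s x \<in> U}"
    proof
      fix y assume y: "y \<in> {enat N<..}"
      show "y \<in> {x. s x \<in> U}"
      proof (cases y)
        case (enat m)
        then have "N \<le> m" using y by simp
        then show ?thesis using N enat by simp
      next
        case infinity
        then show ?thesis using \<open>\<infinity> \<in> {x. s x \<in> U}\<close> by simp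
      qed
    qed
    then show "\<exists>n. {enat n<..} \<subseteq> {x. s x \<in> U}" by blast
  qed
  then show "openin euclidean {x \<in> topspace euclidean. s x \<in> U}" by (simp add: open_openin[symmetric])
qed

context setting begin

lemma core_opt:
  fixes A :: "nat \<Rightarrow> (nat \<times> 'w) option set"
  assumes ne: "\<And>n. A n \<noteq> {}"
    and H: "\<And>k E. finite E \<Longrightarrow> eventually (\<lambda>n. A n \<inter> nbX P Z k E \<noteq> {}) sequentially"
  shows "\<exists>\<sigma>. (\<forall>n. \<sigma> n \<in> A n) \<and> limitin (space_X P Z) \<sigma> None sequentially"
proof -
  define A' where "A' n = (if None \<in> A n then UNIV else {p. Some p \<in> A n})" for n
  have ne': "A' n \<noteq> {}" for n
  proof (cases "None \<in> A n")
    case True then show ?thesis unfolding A'_def by simp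
  next
    case False
    obtain x where x: "x \<in> A n" using ne by blast
    then obtain p where "x = Some p" using False by (cases x) auto
    then have "p \<in> {p. Some p \<in> A n}" using x by simp
    moreover have "A' n = {p. Some p \<in> A n}" unfolding A'_def using False by simp
    ultimately show ?thesis by blast
  qed
  have H': "eventually (\<lambda>n. \<exists>a b. (a,b) \<in> A' n \<and> k \<le> lev a \<and> (\<forall>\<alpha>\<in>E. \<not> (a \<in> Z \<alpha> \<and> b < \<alpha>))) sequentially"
    if fE: "finite E" for k E
  proof -
    obtain a0 where a0: "a0 \<in> P k" using P_nonempty by blast
    then have la0: "lev a0 = k" by (rule lev_eq)
    obtain \<gamma> where \<gamma>: "\<forall>\<alpha>\<in>E. \<alpha> < \<gamma>" using bound[OF countable_finite[OF fE]] by blast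
    have g0: "\<forall>\<alpha>\<in>E. \<not> (a0 \<in> Z \<alpha> \<and> \<gamma> < \<alpha>)" using \<gamma> by (meson less_asym)
    show ?thesis using H[OF fE, of k]
    proof (rule eventually_mono)
      fix n assume An: "A n \<inter> nbX P Z k E \<noteq> {}"
      show "\<exists>a b. (a,b) \<in> A' n \<and> k \<le> lev a \<and> (\<forall>\<alpha>\<in>E. \<not> (a \<in> Z \<alpha> \<and> b < \<alpha>))"
      proof (cases "None \<in> A n")
        case True
        then have "(a0, \<gamma>) \<in> A' n" unfolding A'_def by simp
        then show ?thesis using la0 g0 by auto
      next
        case False
        obtain x where x: "x \<in> A n" "x \<in> nbX P Z k E" using An by blast
        then obtain a b where ab: "x = Some (a,b)" using False by (cases x) auto
        then have "(a,b) \<in> A' n" unfolding A'_def using False x by simp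
        moreover have "k \<le> lev a \<and> (\<forall>\<alpha>\<in>E. \<not> (a \<in> Z \<alpha> \<and> b < \<alpha>))" using x(2) ab Some_nbX' by simp
        ultimately show ?thesis by blast
      qed
    qed
  qed
  obtain \<sigma>' where s1: "\<forall>n. \<sigma>' n \<in> A' n"
    and s2: "\<forall>k. eventually (\<lambda>n. k \<le> lev (fst (\<sigma>' n))) sequentially"
    and s3: "\<forall>\<alpha>. eventually (\<lambda>n. \<not> (fst (\<sigma>' n) \<in> Z \<alpha> \<and> snd (\<sigma>' n) < \<alpha>)) sequentially"
    using core[OF ne' H'] by blast
  define \<sigma> where "\<sigma> n = (if None \<in> A n then None else Some (\<sigma>' n))" for n
  have "\<sigma> n \<in> A n" for n
    using s1[rule_format, of n] unfolding \<sigma>_def A'_def by (cases "None \<in> A n") simp_all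
  moreover have "limitin (space_X P Z) \<sigma> None sequentially"
    unfolding limitin_None
  proof (intro allI impI)
    fix k E assume fE: "finite (E :: 'w set)"
    have "eventually (\<lambda>n. \<forall>\<alpha>\<in>E. \<not> (fst (\<sigma>' n) \<in> Z \<alpha> \<and> snd (\<sigma>' n) < \<alpha>)) sequentially"
      using fE s3 by (intro eventually_ball_finite) blast+
    then show "eventually (\<lambda>n. \<sigma> n \<in> nbX P Z k E) sequentially"
      using s2[rule_format, of k]
    proof (rule eventually_mono[OF eventually_conj])
      fix n assume "(\<forall>\<alpha>\<in>E. \<not> (fst (\<sigma>' n) \<in> Z \<alpha> \<and> snd (\<sigma>' n) < \<alpha>)) \<and> k \<le> lev (fst (\<sigma>' n))"
      then have "Some (\<sigma>' n) \<in> nbX P Z k E" using Some_nbX'[of "fst (\<sigma>' n)" "snd (\<sigma>' n)" k E] by simp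
      then show "\<sigma> n \<in> nbX P Z k E" unfolding \<sigma>_def by simp
    qed
  qed
  ultimately show ?thesis by blast
qed

lemma frechet: "Frechet_space (space_X P Z)"
  unfolding Frechet_space_def
proof (intro allI impI)
  fix A x assume Ax: "A \<subseteq> topspace (space_X P Z) \<and> x \<in> space_X P Z closure_of A"
  show "\<exists>\<sigma>. range \<sigma> \<subseteq> A \<and> limitin (space_X P Z) \<sigma> x sequentially"
  proof (cases x)
    case None
    then have cl: "\<forall>k E. finite E \<longrightarrow> A \<inter> nbX P Z k E \<noteq> {}" using Ax closure_None by blast
    then have "A \<noteq> {}" by blast
    then obtain \<sigma> where "\<forall>n. \<sigma> n \<in> A" "limitin (space_X P Z) \<sigma> None sequentially"
      using core_opt[of "\<lambda>n. A"] cl by auto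
    then show ?thesis using None by blast
  next
    case (Some p)
    have "openin (space_X P Z) {Some p}" by (rule Some_open)
    then have "A \<inter> {Some p} \<noteq> {}" using Ax Some unfolding in_closure_of by blast
    then have pA: "Some p \<in> A" by blast
    have "limitin (space_X P Z) (\<lambda>n. Some p) (Some p) sequentially"
      unfolding limitin_def by simp
    moreover have "range (\<lambda>n::nat. Some p) \<subseteq> A" using pA by auto
    ultimately show ?thesis using Some by blast
  qed
qed

lemma lsel: "L_selective (space_X P Z)"
  unfolding L_selective_def selective_def
proof (intro allI impI)
  fix \<phi> :: "enat \<Rightarrow> (nat \<times> 'w) option set"
  assume lsc: "lsc_map euclidean (space_X P Z) \<phi>"
  have ne: "\<phi> y \<noteq> {}" for y
  proof -
    have "\<forall>y\<in>topspace euclidean. \<phi> y \<noteq> {} \<and> closedin (space_X P Z) (\<phi> y)"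
      using lsc unfolding lsc_map_def by (rule conjunct1)
    then show ?thesis by simp
  qed
  have ev: "eventually (\<lambda>n. \<phi> (enat n) \<inter> W \<noteq> {}) sequentially"
    if W: "openin (space_X P Z) W" and inf: "\<phi> \<infinity> \<inter> W \<noteq> {}" for W
  proof -
    have "\<forall>W. openin (space_X P Z) W \<longrightarrow> openin euclidean {y \<in> topspace euclidean. \<phi> y \<inter> W \<noteq> {}}"
      using lsc unfolding lsc_map_def by (rule conjunct2)
    then have "openin euclidean {y \<in> topspace euclidean. \<phi> y \<inter> W \<noteq> {}}" using W by blast
    then have "openin euclidean {y. \<phi> y \<inter> W \<noteq> {}}" by simp
    then have "open {y. \<phi> y \<inter> W \<noteq> {}}" using open_openin by blast
    then obtain N where N: "{enat N<..} \<subseteq> {y. \<phi> y \<inter> W \<noteq> {}}" using inf unfolding open_enat_iff by blast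
    show ?thesis unfolding eventually_sequentially
    proof (intro exI allI impI)
      fix n assume "Suc N \<le> n"
      then have "enat n \<in> {enat N<..}" by simp
      then show "\<phi> (enat n) \<inter> W \<noteq> {}" using N by blast
    qed
  qed
  show "\<exists>s. continuous_map euclidean (space_X P Z) s \<and> (\<forall>y\<in>topspace euclidean. s y \<in> \<phi> y)"
  proof (cases "\<exists>p. Some p \<in> \<phi> \<infinity>")
    case True
    then obtain p where p: "Some p \<in> \<phi> \<infinity>" by blast
    have "\<phi> \<infinity> \<inter> {Some p} \<noteq> {}" using p by blast
    then have "eventually (\<lambda>n. \<phi> (enat n) \<inter> {Some p} \<noteq> {}) sequentially"
      by (rule ev[OF Some_open])
    then have evp: "eventually (\<lambda>n. Some p \<in> \<phi> (enat n)) sequentially" by simp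
    define s where "s y = (if Some p \<in> \<phi> y then Some p else (SOME x. x \<in> \<phi> y))" for y
    have sphi: "s y \<in> \<phi> y" for y
    proof (cases "Some p \<in> \<phi> y")
      case True then show ?thesis unfolding s_def by simp
    next
      case False
      have "\<exists>x. x \<in> \<phi> y" using ne by blast
      then have "(SOME x. x \<in> \<phi> y) \<in> \<phi> y" by (rule someI_ex)
      then show ?thesis unfolding s_def using False by simp
    qed
    have "continuous_map euclidean (space_X P Z) s"
    proof (rule cont_enat)
      fix U assume "openin (space_X P Z) U" "s \<infinity> \<in> U"
      then have "Some p \<in> U" unfolding s_def using p by simp
      show "eventually (\<lambda>n. s (enat n) \<in> U) sequentially"
        using evp
      proof (rule eventually_mono)
        fix n assume "Some p \<in> \<phi> (enat n)"
        then show "s (enat n) \<in> U" unfolding s_def using \<open>Some p \<in> U\<close> by simp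
      qed
    qed simp
    then show ?thesis using sphi by blast
  next
    case False
    obtain x where x: "x \<in> \<phi> \<infinity>" using ne by blast
    then have Ninf: "None \<in> \<phi> \<infinity>" using False by (cases x) auto
    have H: "eventually (\<lambda>n. \<phi> (enat n) \<inter> nbX P Z k E \<noteq> {}) sequentially" if fE: "finite E" for k E
    proof -
      have "\<phi> \<infinity> \<inter> nbX P Z k E \<noteq> {}" using Ninf None_nbX[of P Z k E] by blast
      then show ?thesis by (rule ev[OF nbX_open[OF fE]])
    qed
    obtain \<sigma> where s1: "\<forall>n. \<sigma> n \<in> \<phi> (enat n)" and s2: "limitin (space_X P Z) \<sigma> None sequentially"
      using core_opt[of "\<lambda>n. \<phi> (enat n)", OF ne H] by auto
    define s where "s y = (case y of enat n \<Rightarrow> \<sigma> n | \<infinity> \<Rightarrow> None)" for y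
    have sphi: "s y \<in> \<phi> y" for y
    proof (cases y)
      case (enat n)
      then show ?thesis using s1 unfolding s_def by simp
    next
      case infinity
      then show ?thesis using Ninf unfolding s_def by simp
    qed
    have "continuous_map euclidean (space_X P Z) s"
    proof (rule cont_enat)
      fix U assume U: "openin (space_X P Z) U" "s \<infinity> \<in> U"
      then have "None \<in> U" unfolding s_def by simp
      then have "eventually (\<lambda>n. \<sigma> n \<in> U) sequentially" using s2 U(1) unfolding limitin_def by blast
      then show "eventually (\<lambda>n. s (enat n) \<in> U) sequentially" unfolding s_def by simp
    qed simp
    then show ?thesis using sphi by blast
  qed
qed

lemma notU:
  assumes P_in_I: "\<forall>i. eventually (\<lambda>n. n \<in> - P i) U"
    and Z_notin_I: "\<forall>\<alpha>. \<not> eventually (\<lambda>n. n \<in> - Z \<alpha>) U"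
  shows "\<not> U_selective U (space_X P Z)"
proof
  assume "U_selective U (space_X P Z)"
  then have sel: "selective (filter_space U) (space_X P Z)" unfolding U_selective_def .
  define \<phi> :: "nat option \<Rightarrow> (nat \<times> 'w) option set"
    where "\<phi> y = (case y of None \<Rightarrow> {None} | Some n \<Rightarrow> Some ` ({n} \<times> UNIV))" for y
  have cl: "closedin (space_X P Z) (\<phi> y)" for y
  proof (cases y)
    case None
    have "openin (space_X P Z) (UNIV - {None})" unfolding openin_X by simp
    then show ?thesis unfolding closedin_def None \<phi>_def by simp
  next
    case (Some n)
    have "nbX P Z (Suc (lev n)) {} \<subseteq> UNIV - Some ` ({n} \<times> UNIV)"
    proof
      fix x assume x: "x \<in> nbX P Z (Suc (lev n)) {}"
      show "x \<in> UNIV - Some ` ({n} \<times> UNIV)"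
      proof (cases x)
        case None then show ?thesis by auto
      next
        case (Some q)
        obtain a b where q: "q = (a,b)" by fastforce
        then have "Suc (lev n) \<le> lev a" using x Some Some_nbX' by simp
        then have "a \<noteq> n" by auto
        then show ?thesis using Some q by auto
      qed
    qed
    then have "openin (space_X P Z) (UNIV - Some ` ({n} \<times> UNIV))"
      unfolding openin_X by blast
    then show ?thesis unfolding closedin_def Some \<phi>_def by simp
  qed
  have ne: "\<phi> y \<noteq> {}" for y unfolding \<phi>_def by (cases y) auto
  have op: "openin (filter_space U) {y \<in> topspace (filter_space U). \<phi> y \<inter> W \<noteq> {}}"
    if W: "openin (space_X P Z) W" for W
    unfolding filter_open
  proof
    assume "None \<in> {y \<in> topspace (filter_space U). \<phi> y \<inter> W \<noteq> {}}"
    then have "None \<in> W" unfolding \<phi>_def by simp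
    have "None \<in> W \<longrightarrow> (\<exists>k E. finite E \<and> nbX P Z k E \<subseteq> W)" using W by (rule iffD1[OF openin_X])
    then obtain k E where fE: "finite E" and kE: "nbX P Z k E \<subseteq> W" using \<open>None \<in> W\<close> by blast
    obtain \<gamma> where \<gamma>: "\<forall>\<alpha>\<in>E. \<alpha> < \<gamma>" using bound[OF countable_finite[OF fE]] by blast
    have "eventually (\<lambda>n. \<forall>i\<in>{..<k}. n \<in> - P i) U"
      using P_in_I by (intro eventually_ball_finite) auto
    then show "eventually (\<lambda>n. Some n \<in> {y \<in> topspace (filter_space U). \<phi> y \<inter> W \<noteq> {}}) U"
    proof (rule eventually_mono)
      fix n assume n: "\<forall>i\<in>{..<k}. n \<in> - P i"
      have "\<forall>\<alpha>\<in>E. \<not> (n \<in> Z \<alpha> \<and> \<gamma> < \<alpha>)" using \<gamma> by (meson less_asym)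
      then have "Some (n, \<gamma>) \<in> nbX P Z k E" using n by (auto simp: Some_nbX)
      then have "Some (n, \<gamma>) \<in> W" using kE by blast
      moreover have "Some (n, \<gamma>) \<in> \<phi> (Some n)" unfolding \<phi>_def by simp
      ultimately show "Some n \<in> {y \<in> topspace (filter_space U). \<phi> y \<inter> W \<noteq> {}}" by auto
    qed
  qed
  have "lsc_map (filter_space U) (space_X P Z) \<phi>"
    unfolding lsc_map_def using ne cl op by blast
  then obtain s where sc: "continuous_map (filter_space U) (space_X P Z) s"
    and sphi: "\<forall>y\<in>topspace (filter_space U). s y \<in> \<phi> y"
    using sel unfolding selective_def by blast
  have "s None \<in> \<phi> None" using sphi by simp
  then have sN: "s None = None" unfolding \<phi>_def by simp
  define \<beta> where "\<beta> n = snd (the (s (Some n)))" for n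
  have sS: "s (Some n) = Some (n, \<beta> n)" for n
  proof -
    have "s (Some n) \<in> \<phi> (Some n)" using sphi by simp
    then have "s (Some n) \<in> Some ` ({n} \<times> UNIV)" unfolding \<phi>_def by simp
    then obtain b where "s (Some n) = Some (n, b)" by blast
    then show ?thesis unfolding \<beta>_def by simp
  qed
  obtain \<gamma> where \<gamma>: "\<forall>b\<in>range \<beta>. b < \<gamma>" using bound[of "range \<beta>"] by blast
  have "openin (space_X P Z) (nbX P Z 0 {\<gamma>})" by (rule nbX_open) simp
  then have "openin (filter_space U) {y \<in> topspace (filter_space U). s y \<in> nbX P Z 0 {\<gamma>}}"
    using sc unfolding continuous_map_def by blast
  moreover have "None \<in> {y \<in> topspace (filter_space U). s y \<in> nbX P Z 0 {\<gamma>}}" using sN by simp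
  ultimately have "eventually (\<lambda>n. Some n \<in> {y \<in> topspace (filter_space U). s y \<in> nbX P Z 0 {\<gamma>}}) U"
    unfolding filter_open by blast
  then have "eventually (\<lambda>n. n \<in> - Z \<gamma>) U"
  proof (rule eventually_mono)
    fix n assume "Some n \<in> {y \<in> topspace (filter_space U). s y \<in> nbX P Z 0 {\<gamma>}}"
    then have "Some (n, \<beta> n) \<in> nbX P Z 0 {\<gamma>}" using sS by simp
    then have "\<not> (n \<in> Z \<gamma> \<and> \<beta> n < \<gamma>)" by (simp add: Some_nbX)
    moreover have "\<beta> n < \<gamma>" using \<gamma> by simp
    ultimately show "n \<in> - Z \<gamma>" by simp
  qed
  then show False using Z_notin_I by blast
qed

end

theorem mainTheorem3:
  fixes f :: "'w::wellorder \<Rightarrow> nat \<Rightarrow> nat"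
    and P :: "nat \<Rightarrow> nat set"
    and Z :: "'w \<Rightarrow> nat set"
    and U :: "nat filter"
  assumes omega1_uncountable: "uncountable (UNIV :: 'w set)"
    and omega1_segments: "\<forall>\<alpha>::'w. countable {\<beta>. \<beta> < \<alpha>}"
    and d_omega1: "dominating_number_is (UNIV :: 'w set)"
    and f_incr: "\<forall>\<alpha> \<beta>. \<alpha> < \<beta> \<longrightarrow> f \<alpha> <* f \<beta>"
    and f_dom: "\<forall>g. \<exists>\<alpha>. g <* f \<alpha>"
    and P_inf: "\<forall>i. infinite (P i)"
    and P_disj: "\<forall>i j. i \<noteq> j \<longrightarrow> P i \<inter> P j = {}"
    and P_cover: "(\<Union>i. P i) = UNIV"
    and Z_def: "\<forall>\<alpha>. Z \<alpha> = {n. \<exists>i. n \<in> P i \<and> n > f \<alpha> i}"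
    and P_in_I: "\<forall>i. eventually (\<lambda>n. n \<in> - P i) U"
    and Z_notin_I: "\<forall>\<alpha>. \<not> eventually (\<lambda>n. n \<in> - Z \<alpha>) U"
  shows "Frechet_space (space_X P Z) \<and> L_selective (space_X P Z) \<and> \<not> U_selective U (space_X P Z)"
proof -
  interpret setting f P Z
    by (rule setting.intro; fact)
  show ?thesis using frechet lsel notU[OF P_in_I Z_notin_I] by blast
qed

end
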